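(* Let $k$ be even and $d\ge1$. For any $k$-XOR instance $\Phi$ on $n$ variables consisting of $m\ge1$ constraints on distinct tuples, and any assignment $x\in\{\pm1\}^n$, $$\Big|\mathrm{sat}_\Phi(x)-\frac12\Big|\le\frac{1}{2m}\Big[\|R^{\Phi,d}_{\mathrm{norm}}\|\cdot\sum_{I\in[n]^{kd/2}}\mathrm{hist}(I)!\Big]^{1/d}.$$
   Context: A $k$-XOR instance $\Phi$ is a set of constraints $C_{S_1},\dots,C_{S_m}$ with distinct $S_a=(s_1,\dots,s_k)\in[n]^k$, where $C_S$ is $\prod_{i=1}^kx_{s_i}=\eta_S$ with $\eta_S\in\{\pm1\}$; $\mathrm{sat}_\Phi(x)$ is the fraction of constraints satisfied by $x$. Constraint tensor: $T_S=\eta_{S}$ if $S=S_a$ for some $a$, else $0$. $\|\cdot\|$ is the spectral norm. $M^\Phi$ is the $n^{k/2}\times n^{k/2}$ matrix indexed by $[n]^{k/2}$ with $M^\Phi_{U,V}=T_{(U,V)}$ (concatenation); $S^\Phi=\frac12(M^\Phi+(M^\Phi)^\top)$. $S^{\Phi,d}$ is indexed by $[n]^{kd/2}$, tuples written as concatenations $(U_1,\dots,U_d)$ of blocks in $[n]^{k/2}$, with $S^{\Phi,d}_{(U_1,\dots,U_d),(V_1,\dots,V_d)}=\prod_{s=1}^dS^\Phi_{U_s,V_s}$. For $I=(i_1,\dots,i_q)$ and $\pi\in\mathbb{S}_q$, $\pi(I)=(i_{\pi(1)},\dots,i_{\pi(q)})$; $R^{\Phi,d}_{I,J}=\frac{1}{((kd/2)!)^2}\sum_{\pi,\sigma\in\mathbb{S}_{kd/2}}S^{\Phi,d}_{\pi(I),\sigma(J)}$.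 $\mathrm{hist}(I)=(\alpha_1,\dots,\alpha_n)$ with $\alpha_i$ the number of occurrences of $i$ in $I$, $\mathrm{hist}(I)!=\prod_i\alpha_i!$. $D_{\mathrm{hist}}$ is diagonal with $(I,I)$ entry $\sqrt{\mathrm{hist}(I)!}$, and $R^{\Phi,d}_{\mathrm{norm}}=D_{\mathrm{hist}}^{-1}R^{\Phi,d}D_{\mathrm{hist}}^{-1}$. *)

theory Defs
  imports "HOL-Analysis.Analysis" "HOL-Combinatorics.Permutations"
begin

text \<open>A k-XOR instance is a finite set C of distinct k-tuples (scopes) together
with signs eta : nat list => real taking values in {-1,1} on C.\<close>

definition tuples :: "nat \<Rightarrow> nat \<Rightarrow> nat list set" where
  "tuples n q = {I. length I = q \<and> set I \<subseteq> {..<n}}"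

definition sat :: "nat list set \<Rightarrow> (nat list \<Rightarrow> real) \<Rightarrow> (nat \<Rightarrow> real) \<Rightarrow> real" where
  "sat C eta x = real (card {S \<in> C. prod_list (map x S) = eta S}) / real (card C)"

definition ctensor :: "nat list set \<Rightarrow> (nat list \<Rightarrow> real) \<Rightarrow> nat list \<Rightarrow> real" where
  "ctensor C eta S = (if S \<in> C then eta S else 0)"

definition Mmat :: "nat list set \<Rightarrow> (nat list \<Rightarrow> real) \<Rightarrow> nat list \<Rightarrow> nat list \<Rightarrow> real" where
  "Mmat C eta U V = ctensor C eta (U @ V)"

definition Smat :: "nat list set \<Rightarrow> (nat list \<Rightarrow> real) \<Rightarrow> nat list \<Rightarrow> nat list \<Rightarrow> real" where
  "Smat C eta U V = (Mmat C eta U V + Mmat C eta V U) / 2"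

definition blk :: "nat \<Rightarrow> nat list \<Rightarrow> nat \<Rightarrow> nat list" where
  "blk h I s = take h (drop (s * h) I)"

definition Sdmat :: "nat \<Rightarrow> nat \<Rightarrow> nat list set \<Rightarrow> (nat list \<Rightarrow> real) \<Rightarrow> nat list \<Rightarrow> nat list \<Rightarrow> real" where
  "Sdmat k d C eta I J = (\<Prod>s<d. Smat C eta (blk (k div 2) I s) (blk (k div 2) J s))"

definition permtup :: "(nat \<Rightarrow> nat) \<Rightarrow> nat list \<Rightarrow> nat list" where
  "permtup p I = map (\<lambda>j. I ! p j) [0..<length I]"

definition Rdmat :: "nat \<Rightarrow> nat \<Rightarrow> nat list set \<Rightarrow> (nat list \<Rightarrow> real) \<Rightarrow> nat list \<Rightarrow> nat list \<Rightarrow> real" where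
  "Rdmat k d C eta I J =
     (\<Sum>p\<in>{p. p permutes {..<k * d div 2}}. \<Sum>q\<in>{q. q permutes {..<k * d div 2}}.
        Sdmat k d C eta (permtup p I) (permtup q J)) / (real (fact (k * d div 2)))^2"

definition histfact :: "nat \<Rightarrow> nat list \<Rightarrow> real" where
  "histfact n I = (\<Prod>i<n. real (fact (count_list I i)))"

definition Rnorm :: "nat \<Rightarrow> nat \<Rightarrow> nat \<Rightarrow> nat list set \<Rightarrow> (nat list \<Rightarrow> real) \<Rightarrow> nat list \<Rightarrow> nat list \<Rightarrow> real" where
  "Rnorm n k d C eta I J = Rdmat k d C eta I J / (sqrt (histfact n I) * sqrt (histfact n J))"

definition specnorm :: "'a set \<Rightarrow> ('a \<Rightarrow> 'a \<Rightarrow> real) \<Rightarrow> real" where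
  "specnorm A Mx = Sup {sqrt (\<Sum>I\<in>A. (\<Sum>J\<in>A. Mx I J * v J)^2) | v. (\<Sum>J\<in>A. (v J)^2) = 1}"

end

theory Submission imports Defs "HOL-Analysis.Analysis" begin

definition xp :: "(nat \<Rightarrow> real) \<Rightarrow> nat list \<Rightarrow> real" where
  "xp x I = prod_list (map x I)"

lemma finite_tuples: "finite (tuples n q)"
  unfolding tuples_def using finite_lists_length_eq[of "{..<n}" q] by (simp add: conj_commute)

lemma xp_append: "xp x (U @ V) = xp x U * xp x V"
  by (simp add: xp_def)

lemma xp_pm1: assumes "\<forall>i<n. x i = 1 \<or> x i = -1" "set S \<subseteq> {..<n}"
  shows "xp x S = 1 \<or> xp x S = -1"
  using assms(2)
proof (induction S)
  case Nil then show ?case by (simp add: xp_def)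
next
  case (Cons a S)
  then have "a < n" "set S \<subseteq> {..<n}" by auto
  with Cons assms(1) show ?case by (auto simp: xp_def)
qed

lemma sum_tuples_append:
  "(\<Sum>I\<in>tuples n (a + b). f I) = (\<Sum>U\<in>tuples n a. \<Sum>V\<in>tuples n b. f (U @ V))"
proof -
  have bij: "bij_betw (\<lambda>(U,V). U @ V) (tuples n a \<times> tuples n b) (tuples n (a + b))"
    unfolding bij_betw_def
  proof
    show "inj_on (\<lambda>(U,V). U @ V) (tuples n a \<times> tuples n b)"
      by (auto simp: inj_on_def tuples_def)
    show "(\<lambda>(U,V). U @ V) ` (tuples n a \<times> tuples n b) = tuples n (a + b)"
    proof
      show "(\<lambda>(U,V). U @ V) ` (tuples n a \<times> tuples n b) \<subseteq> tuples n (a + b)"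
        by (auto simp: tuples_def)
      show "tuples n (a + b) \<subseteq> (\<lambda>(U,V). U @ V) ` (tuples n a \<times> tuples n b)"
      proof
        fix I assume I: "I \<in> tuples n (a + b)"
        have "I = (\<lambda>(U,V). U @ V) (take a I, drop a I)" by simp
        moreover have "(take a I, drop a I) \<in> tuples n a \<times> tuples n b"
          using I by (auto simp: tuples_def dest: in_set_takeD in_set_dropD)
        ultimately show "I \<in> (\<lambda>(U,V). U @ V) ` (tuples n a \<times> tuples n b)" by blast
      qed
    qed
  qed
  have "(\<Sum>I\<in>tuples n (a + b). f I) = (\<Sum>p\<in>tuples n a \<times> tuples n b. f ((\<lambda>(U,V). U @ V) p))"
    using sum.reindex_bij_betw[OF bij, of f] by simp
  also have "\<dots> = (\<Sum>U\<in>tuples n a. \<Sum>V\<in>tuples n b. f (U @ V))"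
    by (simp add: sum.cartesian_product case_prod_beta)
  finally show ?thesis .
qed

lemma permtup_bij:
  assumes p: "p permutes {..<q}"
  shows "bij_betw (permtup p) (tuples n q) (tuples n q)"
proof -
  have sub: "permtup p ` tuples n q \<subseteq> tuples n q"
  proof
    fix J assume "J \<in> permtup p ` tuples n q"
    then obtain I where I: "I \<in> tuples n q" "J = permtup p I" by blast
    then have "J = permute_list p I" by (simp add: permtup_def permute_list_def)
    moreover have "p permutes {..<length I}" using I p by (simp add: tuples_def)
    ultimately have "set J = set I" using mset_permute_list by (metis set_mset_mset)
    then show "J \<in> tuples n q" using I by (auto simp: tuples_def permtup_def)
  qed
  have inj: "inj_on (permtup p) (tuples n q)"
  proof (rule inj_onI)
    fix I J assume I: "I \<in> tuples n q" and J: "J \<in> tuples n q" and e: "permtup p I = permtup p J"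
    have "\<forall>j<q. I ! p j = J ! p j"
    proof (intro allI impI)
      fix j assume "j < q"
      then have "permtup p I ! j = permtup p J ! j" using e by simp
      then show "I ! p j = J ! p j" using \<open>j<q\<close> I J by (simp add: permtup_def tuples_def)
    qed
    moreover have "\<forall>i<q. \<exists>j<q. p j = i"
      using p by (metis lessThan_iff permutes_def)
    ultimately have "\<forall>i<q. I ! i = J ! i" by metis
    then show "I = J" using I J by (simp add: tuples_def nth_equalityI)
  qed
  have "card (permtup p ` tuples n q) = card (tuples n q)" using inj card_image by blast
  then have "permtup p ` tuples n q = tuples n q"
    using sub finite_tuples card_subset_eq by blast
  then show ?thesis using inj by (simp add: bij_betw_def)
qed

lemma xp_permtup:
  assumes p: "p permutes {..<q}" and I: "I \<in> tuples n q"
  shows "xp x (permtup p I) = xp x I"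
proof -
  have "permtup p I = permute_list p I" by (simp add: permtup_def permute_list_def)
  moreover have "p permutes {..<length I}" using I p by (simp add: tuples_def)
  ultimately have "mset (permtup p I) = mset I" by simp
  then have "mset (map x (permtup p I)) = mset (map x I)" by simp
  then show ?thesis unfolding xp_def by (metis prod_mset_prod_list)
qed

lemma tuples_0: "tuples n 0 = {[]}" by (auto simp: tuples_def)

lemma blk_0: "length U = h \<Longrightarrow> blk h (U @ I) 0 = U" by (simp add: blk_def)
lemma blk_Suc: "length U = h \<Longrightarrow> blk h (U @ I) (Suc s) = blk h I s"
  by (simp add: blk_def add.commute)

lemma tensor:
  "(\<Sum>I\<in>tuples n (h*d). \<Sum>J\<in>tuples n (h*d). (\<Prod>s<d. A (blk h I s) (blk h J s)) * xp x I * xp x J)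
   = (\<Sum>U\<in>tuples n h. \<Sum>V\<in>tuples n h. A U V * xp x U * xp x V)^d"
proof (induction d)
  case 0 then show ?case by (simp add: tuples_0 xp_def)
next
  case (Suc d)
  define g where "g U V = A U V * xp x U * xp x V" for U V
  define G where "G I J = (\<Prod>s<d. A (blk h I s) (blk h J s)) * xp x I * xp x J" for I J
  have eq: "(\<Prod>s<Suc d. A (blk h (U@I) s) (blk h (V@J) s)) * xp x (U@I) * xp x (V@J) = g U V * G I J"
    if "U \<in> tuples n h" "V \<in> tuples n h" for U V I J
  proof -
    have lu: "length U = h" "length V = h" using that by (auto simp: tuples_def)
    show ?thesis unfolding g_def G_def
      by (simp only: prod.lessThan_Suc_shift) (simp add: blk_0[OF lu(1)] blk_0[OF lu(2)]
          blk_Suc[OF lu(1)] blk_Suc[OF lu(2)] xp_append)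
  qed
  have "(\<Sum>I\<in>tuples n (h*Suc d). \<Sum>J\<in>tuples n (h*Suc d). (\<Prod>s<Suc d. A (blk h I s) (blk h J s)) * xp x I * xp x J)
     = (\<Sum>U\<in>tuples n h. \<Sum>I\<in>tuples n (h*d). \<Sum>V\<in>tuples n h. \<Sum>J\<in>tuples n (h*d). g U V * G I J)"
    apply (simp only: mult_Suc_right sum_tuples_append)
    apply (rule sum.cong[OF refl])+
    apply (rule eq; assumption)
    done
  also have "\<dots> = (\<Sum>U\<in>tuples n h. \<Sum>V\<in>tuples n h. \<Sum>I\<in>tuples n (h*d). \<Sum>J\<in>tuples n (h*d). g U V * G I J)"
    by (rule sum.cong[OF refl], rule sum.swap)
  also have "\<dots> = (\<Sum>U\<in>tuples n h. \<Sum>V\<in>tuples n h. g U V) * (\<Sum>I\<in>tuples n (h*d). \<Sum>J\<in>tuples n (h*d). G I J)"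
    by (simp only: sum_distrib_right) (simp only: sum_distrib_left)
  also have "\<dots> = (\<Sum>U\<in>tuples n h. \<Sum>V\<in>tuples n h. g U V) ^ Suc d"
    using Suc.IH unfolding G_def g_def by simp
  finally show ?case unfolding g_def .
qed

lemma specnorm_bound:
  assumes fin: "finite A"
  shows "\<bar>\<Sum>I\<in>A. \<Sum>J\<in>A. M I J * z I * z J\<bar> \<le> specnorm A M * (\<Sum>I\<in>A. (z I)^2)"
proof (cases "(\<Sum>I\<in>A. (z I)^2) = 0")
  case True
  then have "\<forall>I\<in>A. z I = 0" using fin by (simp add: sum_nonneg_eq_0_iff)
  then show ?thesis using True by simp
next
  case False
  define c where "c = sqrt (\<Sum>I\<in>A. (z I)^2)"
  have s0: "(\<Sum>I\<in>A. (z I)^2) > 0" using False by (simp add: sum_nonneg order_le_neq_trans)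
  then have c0: "c > 0" by (simp add: c_def)
  have cc: "c * c = (\<Sum>I\<in>A. (z I)^2)" using s0 by (simp add: c_def)
  define v where "v J = z J / c" for J
  have v1: "(\<Sum>J\<in>A. (v J)^2) = 1"
    using c0 cc s0 by (simp add: v_def power_divide sum_divide_distrib[symmetric] power2_eq_square)
  define w where "w I = (\<Sum>J\<in>A. M I J * v J)" for I
  define B where "B = sqrt (\<Sum>I\<in>A. (\<Sum>J\<in>A. \<bar>M I J\<bar>)^2)"
  have bdd: "bdd_above {sqrt (\<Sum>I\<in>A. (\<Sum>J\<in>A. M I J * u J)^2) | u. (\<Sum>J\<in>A. (u J)^2) = 1}"
  proof (rule bdd_aboveI)
    fix y assume "y \<in> {sqrt (\<Sum>I\<in>A. (\<Sum>J\<in>A. M I J * u J)^2) | u. (\<Sum>J\<in>A. (u J)^2) = 1}"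
    then obtain u where u: "(\<Sum>J\<in>A. (u J)^2) = 1" and y: "y = sqrt (\<Sum>I\<in>A. (\<Sum>J\<in>A. M I J * u J)^2)"
      by blast
    have ule: "\<bar>u J\<bar> \<le> 1" if "J \<in> A" for J
    proof -
      have "(u J)^2 \<le> (\<Sum>J\<in>A. (u J)^2)"
        using member_le_sum[of J A "\<lambda>J. (u J)^2"] that fin by simp
      then have "(u J)^2 \<le> 1^2" using u by simp
      then show ?thesis by (metis abs_le_square_iff abs_one)
    qed
    have "(\<Sum>J\<in>A. M I J * u J)^2 \<le> (\<Sum>J\<in>A. \<bar>M I J\<bar>)^2" for I
    proof -
      have "\<bar>\<Sum>J\<in>A. M I J * u J\<bar> \<le> (\<Sum>J\<in>A. \<bar>M I J * u J\<bar>)" by (rule sum_abs)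
      also have "\<dots> \<le> (\<Sum>J\<in>A. \<bar>M I J\<bar>)"
      proof (rule sum_mono)
        fix J assume "J \<in> A"
        then show "\<bar>M I J * u J\<bar> \<le> \<bar>M I J\<bar>"
          using ule[of J] by (simp add: abs_mult mult_left_le)
      qed
      finally have "\<bar>\<Sum>J\<in>A. M I J * u J\<bar> \<le> \<bar>\<Sum>J\<in>A. \<bar>M I J\<bar>\<bar>" by simp
      then show ?thesis using abs_le_square_iff by blast
    qed
    then have "(\<Sum>I\<in>A. (\<Sum>J\<in>A. M I J * u J)^2) \<le> (\<Sum>I\<in>A. (\<Sum>J\<in>A. \<bar>M I J\<bar>)^2)"
      by (simp add: sum_mono)
    then show "y \<le> B" unfolding y B_def by simp
  qed
  have wle: "sqrt (\<Sum>I\<in>A. (w I)^2) \<le> specnorm A M"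
    unfolding specnorm_def w_def
    by (rule cSup_upper[OF _ bdd]) (use v1 in blast)
  have "(\<Sum>I\<in>A. \<Sum>J\<in>A. M I J * z I * z J) = (\<Sum>I\<in>A. z I * (c * w I))"
  proof (rule sum.cong[OF refl])
    fix I assume "I \<in> A"
    have "c * w I = (\<Sum>J\<in>A. M I J * z J)"
      unfolding w_def v_def using c0 by (simp add: sum_distrib_left)
    then show "(\<Sum>J\<in>A. M I J * z I * z J) = z I * (c * w I)"
      by (simp add: sum_distrib_left mult_ac)
  qed
  also have "\<dots> = c * (\<Sum>I\<in>A. z I * w I)" by (simp add: sum_distrib_left mult_ac)
  finally have e: "\<bar>\<Sum>I\<in>A. \<Sum>J\<in>A. M I J * z I * z J\<bar> = c * \<bar>\<Sum>I\<in>A. z I * w I\<bar>"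
    using c0 by (simp add: abs_mult)
  have "\<bar>\<Sum>I\<in>A. z I * w I\<bar> \<le> (\<Sum>I\<in>A. \<bar>z I\<bar> * \<bar>w I\<bar>)"
    using sum_abs[of "\<lambda>I. z I * w I" A] by (simp add: abs_mult)
  also have "\<dots> \<le> L2_set z A * L2_set w A" by (rule L2_set_mult_ineq)
  also have "\<dots> = c * sqrt (\<Sum>I\<in>A. (w I)^2)" by (simp add: L2_set_def c_def)
  also have "\<dots> \<le> c * specnorm A M" using wle c0 by simp
  finally have "c * \<bar>\<Sum>I\<in>A. z I * w I\<bar> \<le> c * (c * specnorm A M)"
    using c0 by simp
  then have "\<bar>\<Sum>I\<in>A. \<Sum>J\<in>A. M I J * z I * z J\<bar> \<le> (c * c) * specnorm A M"
    using e by (simp only: mult.assoc)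
  then show ?thesis using cc by (simp only: mult.commute)
qed

lemma swap4:
  "(\<Sum>I\<in>A. \<Sum>J\<in>B. \<Sum>p\<in>P. \<Sum>r\<in>R. X p r I J) = (\<Sum>p\<in>P. \<Sum>r\<in>R. \<Sum>I\<in>A. \<Sum>J\<in>B. X p r I J)"
proof -
  have "(\<Sum>I\<in>A. \<Sum>J\<in>B. \<Sum>p\<in>P. \<Sum>r\<in>R. X p r I J) = (\<Sum>I\<in>A. \<Sum>p\<in>P. \<Sum>J\<in>B. \<Sum>r\<in>R. X p r I J)"
    by (rule sum.cong[OF refl], rule sum.swap)
  also have "\<dots> = (\<Sum>p\<in>P. \<Sum>I\<in>A. \<Sum>J\<in>B. \<Sum>r\<in>R. X p r I J)" by (rule sum.swap)
  also have "\<dots> = (\<Sum>p\<in>P. \<Sum>I\<in>A. \<Sum>r\<in>R. \<Sum>J\<in>B. X p r I J)"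
    by (rule sum.cong[OF refl], rule sum.cong[OF refl], rule sum.swap)
  also have "\<dots> = (\<Sum>p\<in>P. \<Sum>r\<in>R. \<Sum>I\<in>A. \<Sum>J\<in>B. X p r I J)"
    by (rule sum.cong[OF refl], rule sum.swap)
  finally show ?thesis .
qed

lemma histfact_pos: "histfact n I > 0"
  unfolding histfact_def by (rule prod_pos) simp

theorem mainTheorem7:
  fixes n k d :: nat and C :: "nat list set" and eta :: "nat list \<Rightarrow> real"
    and x :: "nat \<Rightarrow> real"
  assumes "even k" and "d \<ge> 1"
    and "C \<subseteq> tuples n k" and "card C \<ge> 1"
    and "\<forall>S\<in>C. eta S = 1 \<or> eta S = -1"
    and "\<forall>i<n. x i = 1 \<or> x i = -1"
  shows "\<bar>sat C eta x - 1/2\<bar> \<le>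
    (1 / (2 * real (card C))) *
      (specnorm (tuples n (k * d div 2)) (Rnorm n k d C eta)
        * (\<Sum>I\<in>tuples n (k * d div 2). histfact n I)) powr (1 / real d)"
proof -
  note evk = assms(1) and d1 = assms(2) and Csub = assms(3) and Cne = assms(4)
    and etapm = assms(5) and xpm = assms(6)
  define h where "h = k div 2"
  have kh: "k = h + h" using evk by (auto simp: h_def)
  define q where "q = k * d div 2"
  have qh: "q = h * d" unfolding q_def using kh by (simp add: algebra_simps)
  define T where "T = tuples n q"
  have finT: "finite T" by (simp add: T_def finite_tuples)
  have finC: "finite C" using Csub finite_tuples finite_subset by blast
  define m where "m = real (card C)"
  have m0: "m > 0" using Cne by (simp add: m_def)
  have xpt: "xp x I = 1 \<or> xp x I = -1" if "I \<in> tuples n r" for I r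
    using xp_pm1[OF xpm] that by (simp add: tuples_def)
  define P where "P = (\<Sum>S\<in>C. eta S * xp x S)"
  have cardeq: "real (card {S \<in> C. prod_list (map x S) = eta S}) = (\<Sum>S\<in>C. (1 + eta S * xp x S) / 2)"
  proof -
    have "real (card {S \<in> C. prod_list (map x S) = eta S}) = (\<Sum>S\<in>{S \<in> C. xp x S = eta S}. 1)"
      by (simp add: xp_def)
    also have "\<dots> = (\<Sum>S\<in>C. if xp x S = eta S then 1 else 0)"
      using sum.inter_filter[OF finC, of "\<lambda>_. (1::real)" "\<lambda>S. xp x S = eta S"] by simp
    also have "\<dots> = (\<Sum>S\<in>C. (1 + eta S * xp x S) / 2)"
    proof (rule sum.cong[OF refl])
      fix S assume S: "S \<in> C"
      then have "xp x S = 1 \<or> xp x S = -1" using xpt Csub by blast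
      moreover have "eta S = 1 \<or> eta S = -1" using etapm S by blast
      ultimately show "(if xp x S = eta S then 1 else 0) = (1 + eta S * xp x S) / 2"
        by auto
    qed
    finally show ?thesis .
  qed
  have stepA: "sat C eta x - 1/2 = P / (2 * m)"
  proof -
    have "(\<Sum>S\<in>C. (1 + eta S * xp x S) / 2) = (m + P) / 2"
      by (simp add: P_def m_def sum.distrib sum_divide_distrib[symmetric])
    then show ?thesis using m0 cardeq unfolding sat_def m_def[symmetric]
      by (simp add: field_simps)
  qed
  have Q1: "(\<Sum>U\<in>tuples n h. \<Sum>V\<in>tuples n h. Mmat C eta U V * xp x U * xp x V) = P"
  proof -
    have "(\<Sum>U\<in>tuples n h. \<Sum>V\<in>tuples n h. Mmat C eta U V * xp x U * xp x V)
        = (\<Sum>U\<in>tuples n h. \<Sum>V\<in>tuples n h. ctensor C eta (U @ V) * xp x (U @ V))"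
      by (simp add: Mmat_def xp_append mult_ac)
    also have "\<dots> = (\<Sum>S\<in>tuples n k. ctensor C eta S * xp x S)"
      unfolding kh by (rule sum_tuples_append[symmetric])
    also have "\<dots> = (\<Sum>S\<in>tuples n k. if S \<in> C then eta S * xp x S else 0)"
      by (rule sum.cong) (auto simp: ctensor_def)
    also have "\<dots> = (\<Sum>S\<in>tuples n k \<inter> C. eta S * xp x S)"
      by (simp add: sum.inter_restrict finite_tuples)
    also have "tuples n k \<inter> C = C" using Csub by blast
    finally show ?thesis by (simp add: P_def)
  qed
  have Q2: "(\<Sum>U\<in>tuples n h. \<Sum>V\<in>tuples n h. Mmat C eta V U * xp x U * xp x V) = P"
  proof -
    have "(\<Sum>U\<in>tuples n h. \<Sum>V\<in>tuples n h. Mmat C eta V U * xp x U * xp x V)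
       = (\<Sum>V\<in>tuples n h. \<Sum>U\<in>tuples n h. Mmat C eta V U * xp x V * xp x U)"
      by (subst sum.swap) (simp add: mult_ac)
    then show ?thesis using Q1 by simp
  qed
  have stepB: "P = (\<Sum>U\<in>tuples n h. \<Sum>V\<in>tuples n h. Smat C eta U V * xp x U * xp x V)"
  proof -
    have "(\<Sum>U\<in>tuples n h. \<Sum>V\<in>tuples n h. Smat C eta U V * xp x U * xp x V)
      = ((\<Sum>U\<in>tuples n h. \<Sum>V\<in>tuples n h. Mmat C eta U V * xp x U * xp x V)
         + (\<Sum>U\<in>tuples n h. \<Sum>V\<in>tuples n h. Mmat C eta V U * xp x U * xp x V)) / 2"
      by (simp add: Smat_def sum.distrib sum_divide_distrib[symmetric] field_simps)
    then show ?thesis using Q1 Q2 by simp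
  qed
  have stepC: "P ^ d = (\<Sum>I\<in>T. \<Sum>J\<in>T. Sdmat k d C eta I J * xp x I * xp x J)"
    unfolding stepB T_def qh Sdmat_def h_def[symmetric]
    by (rule tensor[symmetric])
  define Perm where "Perm = {p. p permutes {..<q}}"
  define F where "F = real (fact q)"
  have cardP: "real (card Perm) = F" unfolding Perm_def F_def
    using card_permutations[of "{..<q}" q] by simp
  have F0: "F > 0" by (simp add: F_def)
  define W where "W = (\<Sum>I\<in>T. \<Sum>J\<in>T. Sdmat k d C eta I J * xp x I * xp x J)"
  have inner: "(\<Sum>I\<in>T. \<Sum>J\<in>T. Sdmat k d C eta (permtup p I) (permtup r J) * xp x I * xp x J) = W"
    if p: "p \<in> Perm" and r: "r \<in> Perm" for p r
  proof -
    have pp: "p permutes {..<q}" and rp: "r permutes {..<q}" using p r by (auto simp: Perm_def)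
    have "(\<Sum>I\<in>T. \<Sum>J\<in>T. Sdmat k d C eta (permtup p I) (permtup r J) * xp x I * xp x J)
       = (\<Sum>I\<in>T. \<Sum>J\<in>T. Sdmat k d C eta (permtup p I) (permtup r J) * xp x (permtup p I) * xp x (permtup r J))"
      using xp_permtup[OF pp] xp_permtup[OF rp] by (simp add: T_def)
    also have "\<dots> = (\<Sum>I\<in>T. \<Sum>J\<in>T. Sdmat k d C eta (permtup p I) J * xp x (permtup p I) * xp x J)"
      unfolding T_def
      by (rule sum.cong[OF refl], rule sum.reindex_bij_betw[OF permtup_bij[OF rp],
          of "\<lambda>J. Sdmat k d C eta (permtup p _) J * xp x (permtup p _) * xp x J"])
    also have "\<dots> = W"
      using sum.reindex_bij_betw[OF permtup_bij[OF pp, of n],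
          of "\<lambda>I. \<Sum>J\<in>T. Sdmat k d C eta I J * xp x I * xp x J"]
      by (simp add: T_def W_def)
    finally show ?thesis .
  qed
  have stepD: "(\<Sum>I\<in>T. \<Sum>J\<in>T. Rdmat k d C eta I J * xp x I * xp x J) = W"
  proof -
    have "(\<Sum>I\<in>T. \<Sum>J\<in>T. Rdmat k d C eta I J * xp x I * xp x J)
      = (\<Sum>I\<in>T. \<Sum>J\<in>T. \<Sum>p\<in>Perm. \<Sum>r\<in>Perm.
            Sdmat k d C eta (permtup p I) (permtup r J) * xp x I * xp x J / F^2)"
      unfolding Rdmat_def Perm_def[symmetric] q_def[symmetric] F_def[symmetric]
      by (simp add: sum_divide_distrib sum_distrib_right)
    also have "\<dots> = (\<Sum>p\<in>Perm. \<Sum>r\<in>Perm. \<Sum>I\<in>T. \<Sum>J\<in>T.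
            Sdmat k d C eta (permtup p I) (permtup r J) * xp x I * xp x J / F^2)"
      by (rule swap4)
    also have "\<dots> = (\<Sum>p\<in>Perm. \<Sum>r\<in>Perm. W / F^2)"
      using inner by (simp add: sum_divide_distrib[symmetric])
    also have "\<dots> = W" using cardP F0 by (simp add: power2_eq_square)
    finally show ?thesis .
  qed
  define z where "z I = sqrt (histfact n I) * xp x I" for I
  have stepE: "(\<Sum>I\<in>T. \<Sum>J\<in>T. Rnorm n k d C eta I J * z I * z J) = W"
  proof -
    have "Rnorm n k d C eta I J * z I * z J = Rdmat k d C eta I J * xp x I * xp x J" for I J
    proof -
      have "sqrt (histfact n I) > 0" "sqrt (histfact n J) > 0" using histfact_pos by auto
      then show ?thesis unfolding Rnorm_def z_def by (simp add: field_simps)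
    qed
    then show ?thesis using stepD by simp
  qed
  have stepF: "(\<Sum>I\<in>T. (z I)^2) = (\<Sum>I\<in>T. histfact n I)"
  proof (rule sum.cong[OF refl])
    fix I assume "I \<in> T"
    then have "(xp x I)^2 = 1" using xpt[of I q] by (auto simp: T_def)
    then show "(z I)^2 = histfact n I"
      using histfact_pos[of n I] by (simp add: z_def power_mult_distrib)
  qed
  define B where "B = specnorm T (Rnorm n k d C eta) * (\<Sum>I\<in>T. histfact n I)"
  have PdB: "\<bar>P\<bar> ^ d \<le> B"
  proof -
    have "\<bar>P\<bar> ^ d = \<bar>P ^ d\<bar>" by (simp add: power_abs)
    also have "\<dots> = \<bar>\<Sum>I\<in>T. \<Sum>J\<in>T. Rnorm n k d C eta I J * z I * z J\<bar>"
      using stepC stepE W_def by simp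
    also have "\<dots> \<le> B" unfolding B_def stepF[symmetric] by (rule specnorm_bound[OF finT])
    finally show ?thesis .
  qed
  have stepG: "\<bar>P\<bar> \<le> B powr (1 / real d)"
  proof (cases "P = 0")
    case True then show ?thesis by simp
  next
    case False
    then have Pp: "\<bar>P\<bar> > 0" by simp
    have "\<bar>P\<bar> = (\<bar>P\<bar> powr real d) powr (1 / real d)"
      using Pp d1 by (simp add: powr_powr)
    also have "\<dots> = (\<bar>P\<bar> ^ d) powr (1 / real d)" using Pp by (simp add: powr_realpow)
    also have "\<dots> \<le> B powr (1 / real d)"
      by (rule powr_mono2) (use PdB in auto)
    finally show ?thesis .
  qed
  have "\<bar>sat C eta x - 1/2\<bar> = \<bar>P\<bar> / (2 * m)" using stepA m0 by (simp add: abs_divide)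
  also have "\<dots> \<le> B powr (1 / real d) / (2 * m)"
    using stepG m0 by (simp add: divide_right_mono)
  finally show ?thesis by (simp add: B_def T_def q_def m_def)
qed

end
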